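(* There is no $(v,[k_1,k_2,1],\lambda)$ Hadamard partitioned difference family, for any integers $v,k_1,k_2,\lambda$.
   Context: $G$ is a finite group of order $v$ written additively, with difference $x-y:=x+(-y)$. For $B\subseteq G$, $\Delta B$ is the multiset $\{x-y: x,y\in B, x\neq y\}$; for $\mathcal{F}=\{B_1,\dots,B_t\}$, $\Delta\mathcal{F}$ is the multiset union of the $\Delta B_i$. A $(v,[k_1,\dots,k_t],\lambda)$ partitioned difference family (PDF) is a collection $\{B_1,\dots,B_t\}$ of subsets partitioning some group $G$ of order $v$ with $|B_i|=k_i$ such that $\Delta\mathcal{F}$ contains every non-zero element of $G$ exactly $\lambda$ times. It is Hadamard (HPDF) if $v=2\lambda$. *)

theory Defs
  imports "HOL-Library.Multiset" "HOL-Library.Disjoint_Sets"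
begin

text \<open>The group G is the (finite) carrier type 'a, written additively
  (not necessarily abelian); x - y = x + (- y) holds in group_add.\<close>

definition diff_mset :: "'a::group_add set \<Rightarrow> 'a multiset" where
  "diff_mset B = image_mset (\<lambda>(x, y). x - y) (mset_set {(x, y). x \<in> B \<and> y \<in> B \<and> x \<noteq> y})"

definition diff_family :: "'a::group_add set list \<Rightarrow> 'a multiset" where
  "diff_family F = (\<Sum>B\<leftarrow>F. diff_mset B)"

definition is_PDF :: "nat \<Rightarrow> nat list \<Rightarrow> nat \<Rightarrow> ('a::{group_add,finite}) set list \<Rightarrow> bool" where
  "is_PDF v ks lam F \<longleftrightarrow>
     card (UNIV :: 'a set) = v \<and>
     length F = length ks \<and>
     distinct F \<and> partition_on (UNIV :: 'a set) (set F) \<and>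
     (\<forall>i < length F. card (F ! i) = ks ! i) \<and>
     (\<forall>g :: 'a. g \<noteq> 0 \<longrightarrow> count (diff_family F) g = lam)"

definition is_HPDF :: "nat \<Rightarrow> nat list \<Rightarrow> nat \<Rightarrow> ('a::{group_add,finite}) set list \<Rightarrow> bool" where
  "is_HPDF v ks lam F \<longleftrightarrow> is_PDF v ks lam F \<and> v = 2 * lam"

end

theory Submission
  imports Defs "Jordan_Normal_Form.Schur_Decomposition"
begin


definition ind :: "'a set \<Rightarrow> 'a \<Rightarrow> int" where "ind B x = (if x \<in> B then 1 else 0)"

definition NN :: "'a::group_add set \<Rightarrow> 'a \<Rightarrow> int" where
  "NN B g = (\<Sum>y\<in>UNIV. ind B (g + y) * ind B y)"

lemma sum_bij_UNIV:
  fixes h :: "'a \<Rightarrow> 'b::comm_monoid_add"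
  assumes "bij p" shows "(\<Sum>y\<in>UNIV. h (p y)) = (\<Sum>y\<in>UNIV. h y)"
  using sum.reindex_bij_betw[OF assms[unfolded bij_def[symmetric]], of h] assms
  by (simp add: bij_def)

lemma bij_addl: "bij (\<lambda>y::'a::group_add. g + y)"
  by (rule bij_betw_byWitness[where f'="\<lambda>y. -g + y"]) (auto simp: add.assoc[symmetric])

lemma bij_addr: "bij (\<lambda>y::'a::group_add. y + g)"
  by (rule bij_betw_byWitness[where f'="\<lambda>y. y + - g"]) (auto simp: add.assoc)

lemma bij_neg: "bij (\<lambda>y::'a::group_add. - y)"
  by (rule bij_betw_byWitness[where f'="\<lambda>y. - y"]) auto

lemma sum_ind: "finite (UNIV::'a set) \<Longrightarrow> (\<Sum>y\<in>(UNIV::'a set). ind B y) = int (card B)"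
  unfolding ind_def by (simp add: sum.If_cases)

lemma sum_ind_delta: "finite (UNIV::'a set) \<Longrightarrow> (\<Sum>y\<in>(UNIV::'a set). f y * ind {a} y) = f a"
proof -
  assume f: "finite (UNIV::'a set)"
  have "(\<Sum>y\<in>(UNIV::'a set). f y * ind {a} y) = (\<Sum>y\<in>(UNIV::'a set). if y = a then f y else 0)"
    by (rule sum.cong) (auto simp: ind_def)
  then show ?thesis using f by simp
qed

lemma addid0: "(g::'a::group_add) + y = y \<Longrightarrow> g = 0"
  using add_right_cancel[of g y 0] by simp

lemma count_diff_mset:
  fixes B :: "'a::{group_add,finite} set"
  assumes "g \<noteq> 0"
  shows "int (count (diff_mset B) g) = NN B g"
proof -
  let ?S = "{(x, y). x \<in> B \<and> y \<in> B \<and> x \<noteq> y}"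
  let ?f = "\<lambda>(x, y). x - (y::'a)"
  let ?Y = "{y. g + y \<in> B \<and> y \<in> B}"
  have fin: "finite ?S" by simp
  have "count (diff_mset B) g = (\<Sum>p\<in>?f -` {g} \<inter> ?S. 1)"
    unfolding diff_mset_def count_image_mset using fin
    by (intro sum.cong) auto
  also have "\<dots> = card (?f -` {g} \<inter> ?S)" by simp
  also have "?f -` {g} \<inter> ?S = (\<lambda>y. (g + y, y)) ` ?Y"
  proof (rule Set.set_eqI, rule iffI)
    fix p assume "p \<in> ?f -` {g} \<inter> ?S"
    then obtain x y where p: "p = (x, y)" "x \<in> B" "y \<in> B" "x - y = g" by auto
    then have "x = g + y" by (metis diff_add_cancel)
    then show "p \<in> (\<lambda>y. (g + y, y)) ` ?Y" using p by auto
  next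
    fix p assume "p \<in> (\<lambda>y. (g + y, y)) ` ?Y"
    then obtain y where y: "p = (g + y, y)" "g + y \<in> B" "y \<in> B" by auto
    have "g + y \<noteq> y" using assms addid0 by blast
    then show "p \<in> ?f -` {g} \<inter> ?S" using y by (simp add: add_diff_cancel)
  qed
  also have "card ((\<lambda>y. (g + y, y)) ` ?Y) = card ?Y"
    by (rule card_image) (auto simp: inj_on_def)
  finally have 1: "int (count (diff_mset B) g) = int (card ?Y)" by simp
  have "NN B g = (\<Sum>y\<in>UNIV. if y \<in> ?Y then 1 else 0)"
    unfolding NN_def ind_def by (intro sum.cong) auto
  also have "\<dots> = int (card ?Y)" by (simp add: sum.If_cases)
  finally show ?thesis using 1 by simp
qed
lemma sum_shift: "(\<Sum>y\<in>(UNIV::'a::group_add set). h (g + y)) = (\<Sum>y\<in>UNIV. h y)"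
  using sum_bij_UNIV[OF bij_addl, of h g] by simp

lemma ind_single_shift: "ind {a} (g + y) = ind {- g + a} (y::'a::group_add)"
proof -
  have "g + y = a \<longleftrightarrow> y = - g + a"
    by (metis add.assoc add.left_inverse add_0_left add_minus_cancel)
  then show ?thesis by (simp add: ind_def)
qed

lemma NN2_formula:
  fixes B1 B2 :: "'a::{group_add,finite} set"
  assumes e: "\<And>y. ind B2 y = 1 - ind B1 y - ind {a} y" and a1: "a \<notin> B1" and g: "g \<noteq> 0"
  shows "NN B2 g = int (card (UNIV::'a set)) - 2 * int (card B1) - 2 + NN B1 g
     + ind B1 (- g + a) + ind B1 (g + a)"
proof -
  have "NN B2 g = (\<Sum>y\<in>UNIV. 1 - ind B1 y - ind {a} y - ind B1 (g+y) + ind B1 (g+y) * ind B1 y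
      + ind B1 (g+y) * ind {a} y - ind {a} (g+y) + ind B1 y * ind {a} (g + y) + ind {a} (g+y) * ind {a} y)"
    unfolding NN_def e by (intro sum.cong) (auto simp: algebra_simps)
  also have "\<dots> = (\<Sum>y\<in>(UNIV::'a set). 1) - (\<Sum>y\<in>UNIV. ind B1 y) - (\<Sum>y\<in>UNIV. ind {a} y)
      - (\<Sum>y\<in>UNIV. ind B1 (g+y)) + (\<Sum>y\<in>UNIV. ind B1 (g+y) * ind B1 y)
      + (\<Sum>y\<in>UNIV. ind B1 (g+y) * ind {a} y) - (\<Sum>y\<in>UNIV. ind {a} (g+y))
      + (\<Sum>y\<in>UNIV. ind B1 y * ind {a} (g + y)) + (\<Sum>y\<in>UNIV. ind {a} (g+y) * ind {a} y)"
    by (simp add: sum.distrib sum_subtractf del: sum_constant)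
  also have "(\<Sum>y\<in>UNIV. ind B1 (g+y)) = int (card B1)"
    using sum_shift[of "ind B1" g] sum_ind[of B1] by simp
  also have "(\<Sum>y\<in>UNIV. ind {a} (g+y)) = 1"
    using sum_shift[of "ind {a}" g] sum_ind[of "{a}"] by simp
  also have "(\<Sum>y\<in>UNIV. ind B1 y * ind {a} (g + y)) = ind B1 (- g + a)"
    unfolding ind_single_shift by (rule sum_ind_delta) simp
  also have "(\<Sum>y\<in>UNIV. ind B1 (g+y) * ind {a} y) = ind B1 (g + a)"
    by (rule sum_ind_delta) simp
  also have "(\<Sum>y\<in>UNIV. ind {a} (g+y) * ind {a} y) = 0"
    using sum_ind_delta[of "\<lambda>y. ind {a} (g+y)" a] g addid0[of g a] unfolding ind_def by force
  also have "(\<Sum>y\<in>UNIV. ind B1 (g+y) * ind B1 y) = NN B1 g" by (simp add: NN_def)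
  finally show ?thesis using sum_ind[of B1] sum_ind[of "{a}"] by simp
qed

lemma bij_negadd: "bij (\<lambda>g::'a::group_add. - g + a)"
proof -
  have 1: "a - (- g + a) = g" for g
    by (simp only: diff_conv_add_uminus minus_add minus_minus add_minus_cancel)
  have 2: "- (a - y) + a = y" for y
    by (simp only: minus_diff_eq diff_add_cancel)
  show ?thesis
    by (rule bij_betw_byWitness[where f'="\<lambda>y. a - y"]) (use 1 2 in blast)+
qed

lemma ind01: "ind B x = 0 \<or> ind B x = 1" by (simp add: ind_def)

lemma sym_lemma:
  fixes B1 :: "'a::{group_add,finite} set"
  assumes a1: "a \<notin> B1"
    and key: "\<And>g. g \<noteq> 0 \<Longrightarrow> 2 * NN B1 g + ind B1 (- g + a) + ind B1 (g + a) = 2 * int (card B1) + 2 - int lam"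
    and v: "card (UNIV::'a set) = 2 * lam"
  shows "even lam \<and> (\<forall>h. ind B1 (h + a) = ind B1 (- h + a))"
proof -
  have par: "even (ind B1 (- g + a) + ind B1 (g + a) + int lam)" if "g \<noteq> 0" for g
  proof -
    have "ind B1 (- g + a) + ind B1 (g + a) + int lam = 2 * (int (card B1) + 1 - NN B1 g)"
      using key[OF that] by simp
    then show ?thesis by simp
  qed
  have ev: "even lam"
  proof (rule ccontr)
    assume odd: "odd lam"
    have one: "ind B1 (- g + a) + ind B1 (g + a) = (if g = 0 then 0 else 1)" for g
    proof (cases "g = 0")
      case True then show ?thesis using a1 by (simp add: ind_def)
    next
      case False
      have "even (ind B1 (- g + a) + ind B1 (g + a) + int lam)" using par[OF False] .
      with odd show ?thesis using False ind01[of B1 "- g + a"] ind01[of B1 "g + a"] by auto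
    qed
    have "(\<Sum>g\<in>(UNIV::'a set). ind B1 (- g + a) + ind B1 (g + a))
        = (\<Sum>g\<in>(UNIV::'a set). ind B1 (- g + a)) + (\<Sum>g\<in>(UNIV::'a set). ind B1 (g + a))"
      by (simp add: sum.distrib)
    also have "\<dots> = 2 * int (card B1)"
      using sum_bij_UNIV[OF bij_negadd, of "ind B1" a] sum_bij_UNIV[OF bij_addr, of "ind B1" a]
        sum_ind[of B1] by simp
    finally have s1: "(\<Sum>g\<in>(UNIV::'a set). ind B1 (- g + a) + ind B1 (g + a)) = 2 * int (card B1)" .
    have "(\<Sum>g\<in>(UNIV::'a set). ind B1 (- g + a) + ind B1 (g + a))
        = (\<Sum>g\<in>(UNIV::'a set). if g = 0 then 0 else 1)" using one by simp
    also have "\<dots> = int (card (UNIV::'a set)) - 1"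
    proof -
      have "card (UNIV::'a set) > 0" by (simp add: finite_UNIV_card_ge_0)
      moreover have "card (- {0::'a}) = card (UNIV::'a set) - 1"
        by (simp only: Compl_eq_Diff_UNIV card_Diff_singleton UNIV_I)
      ultimately show ?thesis by (simp add: sum.If_cases of_nat_diff)
    qed
    finally have "2 * int (card B1) = int (card (UNIV::'a set)) - 1" using s1 by simp
    with v show False by presburger
  qed
  have "ind B1 (h + a) = ind B1 (- h + a)" for h
  proof (cases "h = 0")
    case True then show ?thesis by simp
  next
    case False
    from par[OF False] ev have "even (ind B1 (- h + a) + ind B1 (h + a))" by simp
    then show ?thesis using ind01[of B1 "- h + a"] ind01[of B1 "h + a"] by auto
  qed
  with ev show ?thesis by blast
qed

context
  fixes B1 :: "'a::{group_add,finite} set" and a :: 'a and c :: int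
  assumes a1: "a \<notin> B1"
    and symB: "\<And>h. ind B1 (h + a) = ind B1 (- h + a)"
    and NNc: "\<And>g. g \<noteq> 0 \<Longrightarrow> NN B1 g = c - ind B1 (g + a)"
begin

definition AA :: "'a \<Rightarrow> 'a \<Rightarrow> int" where "AA x y = ind B1 (- x + y + a)"

lemma AA_diag: "AA x x = 0"
  using a1 by (simp add: AA_def ind_def)

lemma AA_sym: "AA x y = AA y x"
proof -
  have "AA x y = ind B1 (- (- x + y) + a)" unfolding AA_def using symB[of "- x + y"] by simp
  also have "- (- x + y) + a = - y + x + a" by (simp add: minus_add)
  finally show ?thesis by (simp add: AA_def)
qed

lemma AA_rowsum: "(\<Sum>z\<in>UNIV. AA x z) = int (card B1)"
proof -
  have "(\<Sum>z\<in>UNIV. AA x z) = (\<Sum>z\<in>UNIV. (\<lambda>w. ind B1 (w + a)) (- x + z))"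
    by (simp add: AA_def)
  also have "\<dots> = (\<Sum>z\<in>UNIV. ind B1 (z + a))" by (rule sum_shift)
  also have "\<dots> = (\<Sum>z\<in>UNIV. ind B1 z)" using sum_bij_UNIV[OF bij_addr, of "ind B1" a] .
  finally show ?thesis using sum_ind[of B1] by simp
qed

lemma NN0: "NN B1 0 = int (card B1)"
proof -
  have "NN B1 0 = (\<Sum>y\<in>UNIV. ind B1 y)" unfolding NN_def by (intro sum.cong) (auto simp: ind_def)
  then show ?thesis using sum_ind[of B1] by simp
qed

lemma AA_sq: "(\<Sum>y\<in>UNIV. AA x y * AA y z) = NN B1 (- x + z)"
proof -
  have bp: "bij (\<lambda>w. z + (w + - a))"
  proof -
    have 1: "- z + (z + (w + - a)) + a = w" for w by (simp only: add.assoc add.right_inverse add.left_inverse add_0_right add_minus_cancel minus_add_cancel)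
    have 2: "z + ((- z + y + a) + - a) = y" for y by (simp only: add.assoc add.right_inverse add.left_inverse add_0_right add_minus_cancel minus_add_cancel)
    show ?thesis by (rule bij_betw_byWitness[where f'="\<lambda>y. - z + y + a"]) (use 1 2 in blast)+
  qed
  have "(\<Sum>y\<in>UNIV. AA x y * AA y z) = (\<Sum>y\<in>UNIV. ind B1 (- x + y + a) * ind B1 (- z + y + a))"
    by (intro sum.cong refl) (metis AA_def AA_sym)
  also have "\<dots> = (\<Sum>w\<in>UNIV. (\<lambda>y. ind B1 (- x + y + a) * ind B1 (- z + y + a)) (z + (w + - a)))"
    using sum_bij_UNIV[OF bp, of "\<lambda>y. ind B1 (- x + y + a) * ind B1 (- z + y + a)"] by simp
  also have "\<dots> = (\<Sum>w\<in>UNIV. ind B1 ((- x + z) + w) * ind B1 w)"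
  proof (intro sum.cong refl)
    fix w
    have 1: "- z + (z + (w + - a)) + a = w" by (simp only: add.assoc add.right_inverse add.left_inverse add_0_right add_minus_cancel minus_add_cancel)
    have 2: "- x + (z + (w + - a)) + a = (- x + z) + w" by (simp only: add.assoc add.right_inverse add.left_inverse add_0_right add_minus_cancel minus_add_cancel)
    show "(\<lambda>y. ind B1 (- x + y + a) * ind B1 (- z + y + a)) (z + (w + - a)) = ind B1 ((- x + z) + w) * ind B1 w"
      by (simp only: 1 2)
  qed
  finally show ?thesis by (simp add: NN_def)
qed

lemma AA_eq: "(\<Sum>y\<in>UNIV. AA x y * AA y z) + AA x z = c + (if x = z then int (card B1) - c else 0)"
proof (cases "x = z")
  case True then show ?thesis using AA_sq NN0 AA_diag by simp
next
  case False
  have "- x + z \<noteq> 0"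
  proof
    assume h: "- x + z = 0"
    have "x + (- x + z) = z" by (rule add_minus_cancel)
    with h False show False by simp
  qed
  then show ?thesis using AA_sq NNc False by (simp add: AA_def)
qed

lemma k1_sq: "int (card B1) * int (card B1) = c * (int (card (UNIV::'a set)) - 1)"
proof -
  fix x :: 'a
  have "(\<Sum>z\<in>UNIV. (\<Sum>y\<in>UNIV. AA x y * AA y z) + AA x z) = (\<Sum>z\<in>UNIV. c + (if x = z then int (card B1) - c else 0))"
    using AA_eq by simp
  also have "\<dots> = c * int (card (UNIV::'a set)) + int (card B1) - c"
    by (simp add: sum.distrib)
  finally have 1: "(\<Sum>z\<in>UNIV. (\<Sum>y\<in>UNIV. AA x y * AA y z)) + int (card B1) = c * int (card (UNIV::'a set)) + int (card B1) - c"
    using AA_rowsum by (simp add: sum.distrib)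
  have "(\<Sum>z\<in>UNIV. (\<Sum>y\<in>UNIV. AA x y * AA y z)) = (\<Sum>y\<in>UNIV. (\<Sum>z\<in>UNIV. AA x y * AA y z))"
    by (rule sum.swap)
  also have "\<dots> = (\<Sum>y\<in>UNIV. AA x y * (\<Sum>z\<in>UNIV. AA y z))"
    by (simp add: sum_distrib_left)
  also have "\<dots> = int (card B1) * int (card B1)" using AA_rowsum by (simp add: sum_distrib_right[symmetric])
  finally show ?thesis using 1 by (simp add: algebra_simps)
qed

definition MM :: "'a \<Rightarrow> 'a \<Rightarrow> int" where "MM x y = 2 * AA x y + (if x = y then 1 else 0)"

lemma MM_diag: "MM x x = 1" by (simp add: MM_def AA_diag)

lemma MM_sym: "MM x y = MM y x" by (simp add: MM_def AA_sym eq_commute)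

lemma MM_rowsum: "(\<Sum>z\<in>UNIV. MM x z) = 2 * int (card B1) + 1"
  by (simp add: MM_def sum.distrib sum_distrib_left[symmetric] AA_rowsum)

lemma MM_sq: "(\<Sum>y\<in>UNIV. MM x y * MM y z) = 4 * c + (if x = z then 4 * (int (card B1) - c) + 1 else 0)"
proof -
  have d1: "(\<Sum>y\<in>(UNIV::'a set). f y * (if y = z then 1 else 0)) = f z" for f :: "'a \<Rightarrow> int"
  proof -
    have "(\<Sum>y\<in>(UNIV::'a set). f y * (if y = z then 1 else 0)) = (\<Sum>y\<in>(UNIV::'a set). if y = z then f y else 0)"
      by (intro sum.cong) auto
    then show ?thesis by simp
  qed
  have d2: "(\<Sum>y\<in>(UNIV::'a set). (if x = y then 1 else 0) * f y) = f x" for f :: "'a \<Rightarrow> int"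
  proof -
    have "(\<Sum>y\<in>(UNIV::'a set). (if x = y then 1 else 0) * f y) = (\<Sum>y\<in>(UNIV::'a set). if x = y then f y else 0)"
      by (intro sum.cong) auto
    then show ?thesis by simp
  qed
  have "(\<Sum>y\<in>UNIV. MM x y * MM y z) = (\<Sum>y\<in>UNIV. 4 * (AA x y * AA y z) + (2 * AA x y) * (if y = z then 1 else 0)
      + (if x = y then 1 else 0) * (2 * AA y z) + (if x = y then 1 else 0) * (if y = z then 1 else 0))"
    by (intro sum.cong refl) (simp add: MM_def algebra_simps)
  also have "\<dots> = 4 * (\<Sum>y\<in>UNIV. AA x y * AA y z) + (\<Sum>y\<in>UNIV. (2 * AA x y) * (if y = z then 1 else 0))
      + (\<Sum>y\<in>UNIV. (if x = y then 1 else 0) * (2 * AA y z)) + (\<Sum>y\<in>UNIV. (if x = y then 1 else (0::int)) * (if y = z then 1 else 0))"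
    by (simp only: sum.distrib sum_distrib_left)
  also have "\<dots> = 4 * (\<Sum>y\<in>UNIV. AA x y * AA y z) + 2 * AA x z + 2 * AA x z + (if x = z then 1 else 0)"
    by (simp only: d1 d2)
  also have "\<dots> = 4 * ((\<Sum>y\<in>UNIV. AA x y * AA y z) + AA x z) + (if x = z then 1 else 0)" by simp
  also have "\<dots> = 4 * c + (if x = z then 4 * (int (card B1) - c) + 1 else 0)" using AA_eq by simp
  finally show ?thesis .
qed

end



definition trm :: "'a::comm_ring_1 mat \<Rightarrow> 'a" where "trm X = (\<Sum>i<dim_row X. X $$ (i,i))"

lemma trm_comm:
  fixes X Y :: "'a::comm_ring_1 mat"
  assumes X: "X \<in> carrier_mat n m" and Y: "Y \<in> carrier_mat m n"
  shows "trm (X * Y) = trm (Y * X)"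
proof -
  have "trm (X * Y) = (\<Sum>i<n. \<Sum>k<m. X $$ (i,k) * Y $$ (k,i))"
    unfolding trm_def using X Y
    by (intro sum.cong refl) (auto simp: scalar_prod_def lessThan_atLeast0)
  also have "\<dots> = (\<Sum>k<m. \<Sum>i<n. Y $$ (k,i) * X $$ (i,k))"
    by (subst sum.swap) (simp add: mult.commute)
  also have "\<dots> = trm (Y * X)"
    unfolding trm_def using X Y
    by (intro sum.cong refl) (auto simp: scalar_prod_def lessThan_atLeast0)
  finally show ?thesis .
qed

lemma root_prod: "d \<in> set es \<Longrightarrow> poly (\<Prod>a\<leftarrow>es. [:- a, 1:]) (d::'a::comm_ring_1) = 0"
  by (induction es) auto

lemma spectral:
  fixes M :: "complex mat" and c S2 r0 :: complex
  assumes M: "M \<in> carrier_mat n n"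
    and sq: "\<And>i j. i<n \<Longrightarrow> j<n \<Longrightarrow> (M*M) $$ (i,j) = 4*c + (if i=j then S2 else 0)"
    and col: "\<And>j. j<n \<Longrightarrow> (\<Sum>i<n. M $$ (i,j)) = r0"
    and dg: "\<And>i. i<n \<Longrightarrow> M $$ (i,i) = 1"
  shows "\<exists>es. length es = n \<and> (\<forall>d\<in>set es. d = r0 \<or> d^2 = S2) \<and> sum_list es = of_nat n
     \<and> sum_list (map (\<lambda>d. d^2) es) = of_nat n * (4*c + S2)"
proof -
  obtain es where cp: "char_poly M = (\<Prod>a\<leftarrow>es. [:- a, 1:])" and len: "length es = n"
    using char_poly_factorized[OF M] by blast
  obtain B P Q where sd: "schur_decomposition M es = (B,P,Q)" by (cases "schur_decomposition M es") auto
  from schur_decomposition[OF M cp sd] have sim: "similar_mat_wit M B P Q"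
    and ut: "upper_triangular B" and dB: "diag_mat B = es" by auto
  note wit = similar_mat_witD2[OF M sim]
  have Bc: "B \<in> carrier_mat n n" and Pc: "P \<in> carrier_mat n n" and Qc: "Q \<in> carrier_mat n n"
    using wit by auto
  have MPBQ: "M = P * B * Q" and QP: "Q * P = 1\<^sub>m n" using wit by auto
  have ev: "d = r0 \<or> d^2 = S2" if d: "d \<in> set es" for d
  proof -
    have "eigenvalue M d" unfolding eigenvalue_root_char_poly[OF M] cp using root_prod[OF d] .
    then obtain u where u: "u \<in> carrier_vec n" "u \<noteq> 0\<^sub>v n" "M *\<^sub>v u = d \<cdot>\<^sub>v u"
      unfolding eigenvalue_def eigenvector_def using M by auto
    define \<sigma> where "\<sigma> = (\<Sum>k<n. u $ k)"
    have row: "(\<Sum>k<n. M $$ (i,k) * u $ k) = d * u $ i" if "i < n" for i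
    proof -
      have "d * u $ i = (M *\<^sub>v u) $ i" using u that by simp
      also have "\<dots> = (\<Sum>k<n. M $$ (i,k) * u $ k)"
        using that M u(1) by (simp add: scalar_prod_def lessThan_atLeast0)
      finally show ?thesis by simp
    qed
    have "(\<Sum>i<n. d * u $ i) = (\<Sum>i<n. \<Sum>k<n. M $$ (i,k) * u $ k)" using row by simp
    also have "\<dots> = (\<Sum>k<n. (\<Sum>i<n. M $$ (i,k)) * u $ k)"
      by (subst sum.swap) (simp add: sum_distrib_right)
    also have "\<dots> = r0 * \<sigma>" using col by (simp add: \<sigma>_def sum_distrib_left)
    finally have s1: "d * \<sigma> = r0 * \<sigma>" by (simp add: \<sigma>_def sum_distrib_left)
    have MMu: "(M * M) *\<^sub>v u = (d * d) \<cdot>\<^sub>v u"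
      using u M by (simp add: mult_mat_vec smult_smult_assoc)
    have row2: "4 * c * \<sigma> + S2 * u $ i = d * d * u $ i" if i: "i < n" for i
    proof -
      have "((M * M) *\<^sub>v u) $ i = (\<Sum>k<n. (M*M) $$ (i,k) * u $ k)"
        using i M u(1) by (simp add: scalar_prod_def lessThan_atLeast0 del: assoc_mult_mat_vec)
      also have "\<dots> = (\<Sum>k<n. 4 * c * u $ k + (if i = k then S2 * u $ k else 0))"
        using sq i by (intro sum.cong refl) (auto simp: algebra_simps)
      also have "\<dots> = 4 * c * \<sigma> + S2 * u $ i" using i by (simp add: sum.distrib \<sigma>_def sum_distrib_left)
      finally show ?thesis using MMu i u by simp
    qed
    show ?thesis
    proof (cases "d = r0")
      case True then show ?thesis by simp
    next
      case False
      with s1 have "\<sigma> = 0" by simp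
      obtain i where i: "i < n" "u $ i \<noteq> 0"
        using u by (metis carrier_vecD eq_vecI index_zero_vec(1) index_zero_vec(2))
      from row2[OF i(1)] \<open>\<sigma> = 0\<close> have "S2 * u $ i = d * d * u $ i" by simp
      with i have "S2 = d * d" by simp
      then show ?thesis by (simp add: power2_eq_square)
    qed
  qed
  have trM: "trm M = trm B"
  proof -
    have "trm M = trm (P * (B * Q))" using MPBQ Pc Bc Qc by simp
    also have "\<dots> = trm ((B * Q) * P)" by (rule trm_comm[OF Pc]) (use Bc Qc in simp)
    also have "\<dots> = trm (B * (Q * P))" using Pc Bc Qc by simp
    also have "\<dots> = trm B" using QP Bc by simp
    finally show ?thesis .
  qed
  have PBc: "P * B \<in> carrier_mat n n" using Pc Bc by simp
  have BBc: "B * B \<in> carrier_mat n n" using Bc by simp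
  have QPB: "Q * (P * B) = B"
    using assoc_mult_mat[OF Qc Pc Bc, symmetric] QP Bc by simp
  have "M * M = (P * B) * Q * ((P * B) * Q)" using MPBQ by simp
  also have "\<dots> = (P * B) * (Q * ((P * B) * Q))"
    by (rule assoc_mult_mat[OF PBc Qc mult_carrier_mat[OF PBc Qc]])
  also have "Q * ((P * B) * Q) = (Q * (P * B)) * Q" by (rule assoc_mult_mat[OF Qc PBc Qc, symmetric])
  also have "\<dots> = B * Q" using QPB by simp
  also have "(P * B) * (B * Q) = P * (B * (B * Q))" by (rule assoc_mult_mat[OF Pc Bc mult_carrier_mat[OF Bc Qc]])
  also have "B * (B * Q) = (B * B) * Q" by (rule assoc_mult_mat[OF Bc Bc Qc, symmetric])
  finally have MM: "M * M = P * ((B * B) * Q)" .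
  have trMM: "trm (M * M) = trm (B * B)"
  proof -
    have "trm (M * M) = trm (P * ((B * B) * Q))" using MM by simp
    also have "\<dots> = trm (((B * B) * Q) * P)" by (rule trm_comm[OF Pc mult_carrier_mat[OF BBc Qc]])
    also have "((B * B) * Q) * P = (B * B) * (Q * P)" by (rule assoc_mult_mat[OF BBc Qc Pc])
    also have "\<dots> = B * B" using QP right_mult_one_mat[OF BBc] by simp
    finally show ?thesis .
  qed
  have sumes: "sum_list es = (\<Sum>i<n. B $$ (i,i))"
    using dB[symmetric] Bc by (simp add: diag_mat_def sum_list_sum_nth lessThan_atLeast0)
  have sumes2: "sum_list (map (\<lambda>d. d^2) es) = (\<Sum>i<n. (B $$ (i,i))^2)"
    using dB[symmetric] Bc by (simp add: diag_mat_def sum_list_sum_nth lessThan_atLeast0)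
  have trB: "trm B = (\<Sum>i<n. B $$ (i,i))" using Bc by (simp add: trm_def)
  have trBB: "trm (B * B) = (\<Sum>i<n. (B $$ (i,i))^2)"
  proof -
    have "trm (B * B) = (\<Sum>i<n. \<Sum>k<n. B $$ (i,k) * B $$ (k,i))"
      unfolding trm_def using Bc by (intro sum.cong refl) (auto simp: scalar_prod_def lessThan_atLeast0)
    also have "\<dots> = (\<Sum>i<n. \<Sum>k<n. if k = i then (B $$ (i,i))^2 else 0)"
    proof (intro sum.cong refl)
      fix i k assume i: "i \<in> {..<n}" and k: "k \<in> {..<n}"
      show "B $$ (i,k) * B $$ (k,i) = (if k = i then (B $$ (i,i))^2 else 0)"
      proof (cases "k < i")
        case True then show ?thesis using ut i Bc by (auto simp: upper_triangular_def)
      next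
        case False
        show ?thesis
        proof (cases "k = i")
          case True then show ?thesis by (simp add: power2_eq_square)
        next
          case False2: False
          with False have "i < k" by simp
          then show ?thesis using ut k Bc by (auto simp: upper_triangular_def)
        qed
      qed
    qed
    also have "\<dots> = (\<Sum>i<n. (B $$ (i,i))^2)" by simp
    finally show ?thesis .
  qed
  have trM1: "trm M = of_nat n" using M dg by (simp add: trm_def)
  have trMM1: "trm (M * M) = of_nat n * (4*c + S2)" using M sq by (simp add: trm_def)
  show ?thesis
    using len ev sumes sumes2 trB trBB trM trMM trM1 trMM1 by (intro exI[of _ es]) auto
qed


lemma final_int:
  fixes u k1 k2 m :: int
  assumes k1: "k1 \<ge> 1" and k2: "k2 \<ge> 1" and v: "4*u = k1+k2+1"
    and sq: "k1*k1 = (k1+1-u)*(4*u-1)" and e: "(4*u - 2*k1 - 1)^2 = m^2 * (4*u-3)"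
  shows False
proof -
  have e3: "(4*u - 2*k1 - 1)^2 = 3*(4*u-1)"
    using sq by (simp add: power2_eq_square algebra_simps)
  have u1: "u \<ge> 1" using k1 k2 v by linarith
  have eq: "(4*u-3) * (m^2 - 3) = 6" using e e3 by (simp add: algebra_simps)
  have pos: "4*u - 3 > 0" using u1 by linarith
  have "m^2 - 3 > 0"
  proof (rule ccontr)
    assume "\<not> m^2 - 3 > 0"
    then have "(4*u-3) * (m^2 - 3) \<le> 0" using pos by (simp add: mult_nonneg_nonpos)
    with eq show False by simp
  qed
  then have "m^2 - 3 \<ge> 1" by simp
  then have "(4*u-3) * 1 \<le> (4*u-3) * (m^2 - 3)" using pos by (intro mult_left_mono) auto
  with eq have "4*u - 3 \<le> 6" by simp
  then have "u \<le> 2" by simp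
  then have "u = 1 \<or> u = 2" using u1 by linarith
  then show False
  proof
    assume "u = 2"
    with eq have "5 * (m^2 - 3) = 6" by simp
    then show False by presburger
  next
    assume u: "u = 1"
    with e3 have "(3 - 2*k1)^2 = 9" by simp
    then have "(3 - 2*k1 - 3) * (3 - 2*k1 + 3) = 0" by (simp add: power2_eq_square algebra_simps)
    then have "k1 = 0 \<or> k1 = 3" by auto
    then show False using k1 k2 v u by linarith
  qed
qed


lemma list_count:
  fixes es :: "complex list" and r s :: complex
  assumes "\<forall>d\<in>set es. d = r \<or> d = s \<or> d = - s"
  shows "\<exists>a m. a \<le> length es \<and> sum_list es = of_nat a * r + of_int m * s
     \<and> sum_list (map (\<lambda>d. d^2) es) = of_nat a * r^2 + of_nat (length es - a) * s^2"
  using assms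
proof (induction es)
  case Nil then show ?case by (intro exI[of _ 0]) auto
next
  case (Cons d es)
  have "\<forall>d\<in>set es. d = r \<or> d = s \<or> d = - s" using Cons.prems by simp
  from Cons.IH[OF this] obtain a m where IH: "a \<le> length es" "sum_list es = of_nat a * r + of_int m * s"
     "sum_list (map (\<lambda>d. d^2) es) = of_nat a * r^2 + of_nat (length es - a) * s^2" by blast
  have d: "d = r \<or> d = s \<or> d = - s" using Cons.prems by simp
  have sub: "of_nat (Suc (length es) - a) = (1::complex) + of_nat (length es - a)"
    using IH(1) by (simp add: Suc_diff_le)
  show ?case
  proof (cases "d = r")
    case True
    then show ?thesis using IH by (intro exI[of _ "Suc a"] exI[of _ m]) (auto simp: algebra_simps)
  next
    case False
    then have "d = s \<or> d = - s" using d by simp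
    then show ?thesis
    proof
      assume ds: "d = s"
      show ?thesis using IH sub ds by (intro exI[of _ a] exI[of _ "m + 1"]) (auto simp: algebra_simps)
    next
      assume ds: "d = - s"
      show ?thesis using IH sub ds by (intro exI[of _ a] exI[of _ "m - 1"]) (auto simp: algebra_simps)
    qed
  qed
qed

lemma sum_enum:
  assumes e: "bij_betw e {0..<(n::nat)} (UNIV::'a set)"
  shows "(\<Sum>k<n. f (e k)) = (\<Sum>y\<in>UNIV. (f y :: 'b::comm_monoid_add))"
  using sum.reindex_bij_betw[OF e, of f] by (simp add: atLeast0LessThan)

theorem corollary4p3:
  fixes F :: "('a::{group_add,finite}) set list"
    and v k1 k2 lam :: nat
  shows "\<not> is_HPDF v [k1, k2, 1] lam F"
proof
  assume H: "is_HPDF v [k1, k2, 1] lam F"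
  then have v: "card (UNIV::'a set) = v" and lenF: "length F = 3" and dist: "distinct F"
    and part: "partition_on UNIV (set F)" and cards: "\<forall>i<length F. card (F!i) = [k1,k2,1]!i"
    and cnt: "\<forall>g::'a. g \<noteq> 0 \<longrightarrow> count (diff_family F) g = lam" and vl: "v = 2*lam"
    unfolding is_HPDF_def is_PDF_def by auto
  obtain B1 B2 B3 where F: "F = [B1,B2,B3]"
    using lenF by (auto simp: numeral_3_eq_3 length_Suc_conv)
  have cB1: "card B1 = k1" using cards F by (auto dest: spec[of _ 0])
  have cB2: "card B2 = k2" using cards F by (auto dest: spec[of _ 1])
  have cB3: "card B3 = 1" using cards F by (auto dest: spec[of _ 2])
  obtain a where B3: "B3 = {a}" using card_1_singletonE[OF cB3] by blast
  have dj: "disjoint {B1, B2, {a}}" using partition_onD2[OF part] F B3 by simp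
  have dd: "B1 \<noteq> B2" "B1 \<noteq> {a}" "B2 \<noteq> {a}" using dist F B3 by auto
  have disj: "B1 \<inter> B2 = {}" "a \<notin> B1" "a \<notin> B2"
    using dj dd unfolding disjoint_def by auto
  have cov: "x \<in> B1 \<or> x \<in> B2 \<or> x = a" for x
    using partition_onD1[OF part] F B3 by auto
  have ne: "B1 \<noteq> {}" "B2 \<noteq> {}" using partition_onD3[OF part] F by auto
  have k1pos: "k1 \<ge> 1" using ne(1) cB1 by (metis One_nat_def Suc_leI card_gt_0_iff finite)
  have k2pos: "k2 \<ge> 1" using ne(2) cB2 by (metis One_nat_def Suc_leI card_gt_0_iff finite)
  have indB2: "ind B2 y = 1 - ind B1 y - ind {a} y" for y
    using disj cov[of y] by (auto simp: ind_def)
  have NNa: "NN {a} g = 0" if g: "g \<noteq> 0" for g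
  proof -
    have "NN {a} g = ind {a} (g + a)" unfolding NN_def by (rule sum_ind_delta) simp
    moreover have "g + a \<noteq> a" using g addid0[of g a] by blast
    ultimately show ?thesis by (simp add: ind_def)
  qed
  have cntNN: "NN B1 g + NN B2 g = int lam" if g: "g \<noteq> 0" for g
  proof -
    have "count (diff_family F) g = count (diff_mset B1) g + count (diff_mset B2) g + count (diff_mset {a}) g"
      by (simp add: diff_family_def F B3)
    then have "int lam = NN B1 g + NN B2 g + NN {a} g"
      using cnt g count_diff_mset[OF g, of B1] count_diff_mset[OF g, of B2] count_diff_mset[OF g, of "{a}"]
      by simp
    then show ?thesis using NNa[OF g] by simp
  qed
  have key: "2 * NN B1 g + ind B1 (- g + a) + ind B1 (g + a) = 2 * int (card B1) + 2 - int lam"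
    if g: "g \<noteq> 0" for g
    using NN2_formula[of B2 B1 a g, OF indB2 disj(2) g] cntNN[OF g] v vl by simp
  from sym_lemma[of a B1 lam, OF disj(2) key v[unfolded vl]]
  have ev: "even lam" and symB: "\<And>h. ind B1 (h + a) = ind B1 (- h + a)" by auto
  define u where "u = int (lam div 2)"
  have vu: "int v = 4 * u" using ev vl u_def by auto
  define c where "c = int k1 + 1 - u"
  have NNc: "NN B1 g = c - ind B1 (g + a)" if g: "g \<noteq> 0" for g
    using key[OF g] symB[of g] cB1 ev unfolding c_def u_def by auto
  have k2v: "int k2 = int v - int k1 - 1"
  proof -
    have "(\<Sum>y\<in>UNIV. ind B2 y) = (\<Sum>y\<in>(UNIV::'a set). 1) - (\<Sum>y\<in>UNIV. ind B1 y) - (\<Sum>y\<in>UNIV. ind {a} y)"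
      unfolding indB2 by (simp add: sum_subtractf)
    then show ?thesis using sum_ind[of B2] sum_ind[of B1] sum_ind[of "{a}"] cB1 cB2 v by simp
  qed
  have k1sq: "int k1 * int k1 = c * (int v - 1)"
    using k1_sq[of a B1 c, OF disj(2) symB NNc] cB1 v by simp
  obtain e where e: "bij_betw e {0..<v} (UNIV::'a set)"
    using ex_bij_betw_nat_finite[of "UNIV::'a set"] v by auto
  have einj: "e i = e j \<longleftrightarrow> i = j" if "i < v" "j < v" for i j
    using e that unfolding bij_betw_def inj_on_def by auto
  define Mc :: "complex mat" where "Mc = mat v v (\<lambda>(i,j). of_int (MM B1 a (e i) (e j)))"
  have Mc: "Mc \<in> carrier_mat v v" by (simp add: Mc_def)
  have sq: "(Mc*Mc) $$ (i,j) = 4 * of_int c + (if i=j then of_int (4 * (int k1 - c) + 1) else 0)"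
    if i: "i < v" and j: "j < v" for i j
  proof -
    have "(Mc*Mc) $$ (i,j) = (\<Sum>k<v. of_int (MM B1 a (e i) (e k) * MM B1 a (e k) (e j)))"
      using i j by (simp add: Mc_def scalar_prod_def lessThan_atLeast0)
    also have "\<dots> = of_int (\<Sum>y\<in>UNIV. MM B1 a (e i) y * MM B1 a y (e j))"
      using sum_enum[OF e, of "\<lambda>y. of_int (MM B1 a (e i) y * MM B1 a y (e j)) :: complex"] by simp
    also have "\<dots> = of_int (4 * c + (if e i = e j then 4 * (int (card B1) - c) + 1 else 0))"
      using MM_sq[of a B1 c, OF disj(2) symB NNc] by simp
    finally show ?thesis using einj[OF i j] cB1 by simp
  qed
  have col: "(\<Sum>i<v. Mc $$ (i,j)) = of_int (2 * int k1 + 1)" if j: "j < v" for j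
  proof -
    have "(\<Sum>i<v. Mc $$ (i,j)) = (\<Sum>i<v. of_int (MM B1 a (e j) (e i)))"
      using j by (intro sum.cong refl) (simp add: Mc_def MM_sym[of a B1 c, OF disj(2) symB NNc])
    also have "\<dots> = of_int (\<Sum>y\<in>UNIV. MM B1 a (e j) y)"
      using sum_enum[OF e, of "\<lambda>y. of_int (MM B1 a (e j) y) :: complex"] by simp
    also have "\<dots> = of_int (2 * int k1 + 1)"
      using MM_rowsum[of a B1 c, OF disj(2) symB NNc] cB1 by simp
    finally show ?thesis .
  qed
  have dg: "Mc $$ (i,i) = 1" if "i < v" for i
    using that MM_diag[of a B1 c, OF disj(2) symB NNc] by (simp add: Mc_def)
  from spectral[OF Mc sq col dg] obtain es :: "complex list" where es: "length es = v"
    "\<forall>d\<in>set es. d = of_int (2 * int k1 + 1) \<or> d^2 = of_int (4 * (int k1 - c) + 1)"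
    "sum_list es = of_nat v"
    "sum_list (map (\<lambda>d. d^2) es) = of_nat v * (4 * of_int c + of_int (4 * (int k1 - c) + 1))"
    by blast
  have u1: "u \<ge> 1" using vu k2v k1pos k2pos by linarith
  define S2 where "S2 = 4 * (int k1 - c) + 1"
  have S2u: "S2 = 4*u - 3" by (simp add: S2_def c_def)
  define r where "r = 2 * int k1 + 1"
  have rS: "r*r = S2 + 4*c*int v" using k1sq by (simp add: r_def S2_def algebra_simps)
  have c0: "c \<noteq> 0" using k1sq k1pos by auto
  have v0: "int v \<noteq> 0" using vu u1 by simp
  define s where "s = complex_of_real (sqrt (real_of_int S2))"
  have S2pos: "S2 \<ge> 0" using S2u u1 by simp
  have ss: "s^2 = of_int S2"
  proof -
    have "(sqrt (real_of_int S2))^2 = real_of_int S2" using S2pos by simp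
    then have "complex_of_real ((sqrt (real_of_int S2))^2) = complex_of_real (real_of_int S2)" by simp
    then show ?thesis unfolding s_def by simp
  qed
  have dd: "\<forall>d\<in>set es. d = of_int r \<or> d = s \<or> d = - s"
  proof
    fix d assume "d \<in> set es"
    then have "d = of_int r \<or> d^2 = s^2" using es(2) ss by (auto simp: r_def S2_def)
    then show "d = of_int r \<or> d = s \<or> d = - s"
    proof
      assume "d^2 = s^2"
      then have "(d - s) * (d + s) = 0" by (simp add: power2_eq_square algebra_simps)
      then show ?thesis by (auto simp: add_eq_0_iff2)
    qed simp
  qed
  from list_count[OF dd] obtain a m where am: "a \<le> length es"
    "sum_list es = of_nat a * of_int r + of_int m * s"
    "sum_list (map (\<lambda>d. d^2) es) = of_nat a * (of_int r)^2 + of_nat (length es - a) * s^2"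
    by blast
  have E2: "(of_int (int a * r^2 + (int v - int a) * S2) :: complex) = of_int (int v * (4*c+S2))"
    using es(1,4) am(1,3) ss by (simp add: of_nat_diff S2_def algebra_simps)
  then have E2i: "int a * r^2 + (int v - int a) * S2 = int v * (4*c+S2)" by (simp only: of_int_eq_iff)
  have "(int a - 1) * (4 * c * int v) = 0" using E2i rS by (simp add: power2_eq_square algebra_simps)
  then have a1: "a = 1" using c0 v0 by simp
  have E1: "of_int m * s = (of_int (int v - r) :: complex)" using es(3) am(2) a1 by (simp add: algebra_simps)
  then have "(of_int m * s)^2 = (of_int (int v - r) :: complex)^2" by simp
  then have "(of_int (m^2 * S2) :: complex) = of_int ((int v - r)^2)" using ss by (simp add: power_mult_distrib)
  then have E1i: "m^2 * S2 = (int v - r)^2" by (simp only: of_int_eq_iff)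
  show False
  proof (rule final_int[of "int k1" "int k2" u m])
    show "int k1 \<ge> 1" "int k2 \<ge> 1" using k1pos k2pos by auto
    show "4*u = int k1 + int k2 + 1" using vu k2v by simp
    show "int k1 * int k1 = (int k1 + 1 - u) * (4*u - 1)" using k1sq vu by (simp add: c_def)
    show "(4*u - 2 * int k1 - 1)^2 = m^2 * (4*u - 3)" 
    proof -
      have "4*u - 2 * int k1 - 1 = 4 * u - (2 * int k1 + 1)" by simp
      then show ?thesis using E1i vu S2u by (simp add: r_def diff_diff_eq)
    qed
  qed
qed


end
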